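(* Let $P(\lambda)=\begin{bmatrix} A(\lambda) & B(\lambda)\\ -C(\lambda) & D(\lambda)\end{bmatrix}$ be a polynomial system matrix of a rational matrix $G(\lambda)$, where $A(\lambda)$ and $C(\lambda)$ are right coprime. Let $H_2(\lambda)$ be a right polynomial basis of $G(\lambda)$ and $H_1(\lambda)=-A(\lambda)^{-1}B(\lambda)H_2(\lambda)$. Then $H_1(\lambda)$ is polynomial and $\begin{bmatrix}H_1(\lambda)\\H_2(\lambda)\end{bmatrix}$ is a right polynomial basis of $P(\lambda)$.
   Context: $\mathbb F$ is an arbitrary field. A polynomial system matrix of $G(\lambda)\in\mathbb F(\lambda)^{p\times m}$ is $P(\lambda)=\begin{bmatrix} A(\lambda) & B(\lambda)\\ -C(\lambda) & D(\lambda)\end{bmatrix}$ with $A\in\mathbb F[\lambda]^{n\times n}$ regular, $B,C,D$ polynomial of compatible sizes, and $G=D+CA^{-1}B$. $A\in\mathbb F[\lambda]^{n\times n}$ and $C\in\mathbb F[\lambda]^{p\times n}$ are right coprime if all their common right divisors are unimodular (equivalently, there exist polynomial $X,Y$ with $XA+YC=I_n$). A right polynomial basis of a rational matrix $G$ is a polynomial matrix whose columns form a basis of $\mathcal N_r(G)=\{x\in\mathbb F(\lambda)^m: Gx=0\}$. *)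

theory Defs
  imports "HOL-Computational_Algebra.Fraction_Field" "HOL-Computational_Algebra.Polynomial"
    "Jordan_Normal_Form.Matrix" "Jordan_Normal_Form.Determinant"
begin

text \<open>Rational functions over a field are represented as the fraction field
  of the polynomial ring; a polynomial matrix is viewed as a rational matrix
  by entrywise embedding.\<close>

type_synonym 'a ratfun = "'a poly fract"

definition rat_of_pmat :: "'a::field poly mat \<Rightarrow> 'a ratfun mat" where
  "rat_of_pmat M = map_mat to_fract M"

definition is_poly_mat :: "'a::field ratfun mat \<Rightarrow> bool" where
  "is_poly_mat M \<longleftrightarrow> (\<exists>K. rat_of_pmat K = M)"

definition right_null_space :: "'a::field ratfun mat \<Rightarrow> 'a ratfun vec set" where
  "right_null_space G = {x \<in> carrier_vec (dim_col G). G *\<^sub>v x = 0\<^sub>v (dim_row G)}"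

definition columns_basis_of :: "'a::field mat \<Rightarrow> 'a vec set \<Rightarrow> bool" where
  "columns_basis_of H V \<longleftrightarrow>
     (\<forall>j < dim_col H. col H j \<in> V) \<and>
     (\<forall>c \<in> carrier_vec (dim_col H). H *\<^sub>v c = 0\<^sub>v (dim_row H) \<longrightarrow> c = 0\<^sub>v (dim_col H)) \<and>
     (\<forall>x \<in> V. \<exists>c \<in> carrier_vec (dim_col H). x = H *\<^sub>v c)"

definition right_poly_basis :: "'a::field poly mat \<Rightarrow> 'a ratfun mat \<Rightarrow> bool" where
  "right_poly_basis H G \<longleftrightarrow> dim_row H = dim_col G \<and>
     columns_basis_of (rat_of_pmat H) (right_null_space G)"

text \<open>Right coprimeness of A (n x n) and C (p x n): Bezout characterisation
  X A + Y C = I_n with polynomial X, Y.\<close>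
definition right_coprime :: "'a::field poly mat \<Rightarrow> 'a poly mat \<Rightarrow> bool" where
  "right_coprime A C \<longleftrightarrow>
     (\<exists>X Y. X \<in> carrier_mat (dim_col A) (dim_row A) \<and> Y \<in> carrier_mat (dim_col A) (dim_row C) \<and>
            X * A + Y * C = 1\<^sub>m (dim_col A))"

end

theory Submission
  imports Defs
begin

lemma rat_mult: "A \<in> carrier_mat nr n \<Longrightarrow> B \<in> carrier_mat n nc \<Longrightarrow>
  rat_of_pmat (A * B) = rat_of_pmat A * rat_of_pmat B"
proof -
  interpret inj_comm_ring_hom "to_fract :: 'a::field poly \<Rightarrow> _" by (unfold_locales, auto)
  show "A \<in> carrier_mat nr n \<Longrightarrow> B \<in> carrier_mat n nc \<Longrightarrow> ?thesis"
    unfolding rat_of_pmat_def by (rule mat_hom_mult)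
qed

lemma rat_add: "A \<in> carrier_mat nr nc \<Longrightarrow> B \<in> carrier_mat nr nc \<Longrightarrow>
  rat_of_pmat (A + B) = rat_of_pmat A + rat_of_pmat B"
  unfolding rat_of_pmat_def by (rule eq_matI, auto)

lemma rat_minus: "A \<in> carrier_mat nr nc \<Longrightarrow> B \<in> carrier_mat nr nc \<Longrightarrow>
  rat_of_pmat (A - B) = rat_of_pmat A - rat_of_pmat B"
  unfolding rat_of_pmat_def by (rule eq_matI, auto)

lemma rat_uminus: "rat_of_pmat (- A) = - rat_of_pmat A"
  unfolding rat_of_pmat_def by (rule eq_matI, auto)

lemma rat_one: "rat_of_pmat (1\<^sub>m n) = 1\<^sub>m n"
  unfolding rat_of_pmat_def by (rule eq_matI, auto)

lemma rat_carrier[simp]: "rat_of_pmat A \<in> carrier_mat nr nc \<longleftrightarrow> A \<in> carrier_mat nr nc"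
  "dim_row (rat_of_pmat A) = dim_row A" "dim_col (rat_of_pmat A) = dim_col A"
  unfolding rat_of_pmat_def carrier_mat_def by auto

lemma rat_append_rows: "A \<in> carrier_mat nr1 nc \<Longrightarrow> B \<in> carrier_mat nr2 nc \<Longrightarrow>
  rat_of_pmat (A @\<^sub>r B) = rat_of_pmat A @\<^sub>r rat_of_pmat B"
  unfolding rat_of_pmat_def append_rows_def
  by (subst map_four_block_mat[of _ nr1 nc _ 0 _ nr2], auto)

lemma rat_four: "A \<in> carrier_mat nr1 nc1 \<Longrightarrow> B \<in> carrier_mat nr1 nc2 \<Longrightarrow>
  C \<in> carrier_mat nr2 nc1 \<Longrightarrow> D \<in> carrier_mat nr2 nc2 \<Longrightarrow>
  rat_of_pmat (four_block_mat A B C D) = four_block_mat (rat_of_pmat A) (rat_of_pmat B) (rat_of_pmat C) (rat_of_pmat D)"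
  unfolding rat_of_pmat_def by (rule map_four_block_mat)

lemma null_mat: assumes G: "G \<in> carrier_mat p m" and H: "H \<in> carrier_mat m k"
  and col: "\<forall>j<k. G *\<^sub>v col H j = 0\<^sub>v p"
  shows "G * H = 0\<^sub>m p k"
proof (rule eq_matI)
  fix i j assume "i < dim_row (0\<^sub>m p k :: 'a mat)" "j < dim_col (0\<^sub>m p k :: 'a mat)"
  hence ij: "i < p" "j < k" by auto
  have "(G * H) $$ (i,j) = (G *\<^sub>v col H j) $ i" using G H ij by auto
  also have "\<dots> = 0" using col ij by auto
  finally show "(G * H) $$ (i, j) = 0\<^sub>m p k $$ (i, j)" using ij by auto
qed (insert G H, auto)


lemma add_eq0: fixes A B :: "'b::ab_group_add mat"
  assumes "A \<in> carrier_mat nr nc" "B \<in> carrier_mat nr nc" "A + B = 0\<^sub>m nr nc"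
  shows "B = - A"
proof (rule eq_matI)
  fix i j assume ij: "i < dim_row (- A)" "j < dim_col (- A)"
  have "(A + B) $$ (i,j) = 0" unfolding assms(3) using assms ij by simp
  moreover have "(A + B) $$ (i,j) = A $$ (i,j) + B $$ (i,j)" using assms(1,2) ij by auto
  ultimately have "A $$ (i,j) + B $$ (i,j) = 0" by simp
  thus "B $$ (i,j) = (- A) $$ (i,j)" using assms(1,2) ij by (simp add: eq_neg_iff_add_eq_0 add.commute)
qed (insert assms, auto)

lemma neg_lemma: fixes A B :: "'b::ab_group_add mat"
  assumes "A \<in> carrier_mat nr nc" "B \<in> carrier_mat nr nc" "M = A + - B"
  shows "- M = B - A"
  unfolding assms(3) by (rule eq_matI) (use assms in auto)

lemma vec_neg: "A \<in> carrier_mat nr nc \<Longrightarrow> v \<in> carrier_vec nc \<Longrightarrow>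
  A *\<^sub>v (- v) = - (A *\<^sub>v (v :: 'b::ring vec))"
  by (rule eq_vecI) auto

lemma vec_add_eq0: fixes v w :: "'b::ab_group_add vec"
  assumes "v \<in> carrier_vec n" "w \<in> carrier_vec n" "v + w = 0\<^sub>v n"
  shows "v = - w"
proof (rule eq_vecI)
  fix i assume i: "i < dim_vec (- w)"
  have "(v + w) $ i = 0" unfolding assms(3) using assms i by simp
  moreover have "(v + w) $ i = v $ i + w $ i" using assms(1,2) i by auto
  ultimately have "v $ i + w $ i = 0" by simp
  thus "v $ i = (- w) $ i" using assms(1,2) i by (simp add: eq_neg_iff_add_eq_0)
qed (insert assms, auto)

lemma zero_append: "0\<^sub>v (n + p) = 0\<^sub>v n @\<^sub>v (0\<^sub>v p :: 'b::zero vec)"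
  by (rule eq_vecI) auto

theorem lemma3p7:
  fixes A B C D :: "'a::field poly mat" and Ainv G :: "'a ratfun mat"
    and H2 :: "'a poly mat" and n m p :: nat
  assumes A: "A \<in> carrier_mat n n" and B: "B \<in> carrier_mat n m"
    and C: "C \<in> carrier_mat p n" and D: "D \<in> carrier_mat p m"
    and regular: "det A \<noteq> 0"
    and Ainv: "Ainv \<in> carrier_mat n n"
      "Ainv * rat_of_pmat A = 1\<^sub>m n" "rat_of_pmat A * Ainv = 1\<^sub>m n"
    and G: "G = rat_of_pmat D + rat_of_pmat C * Ainv * rat_of_pmat B"
    and coprime: "right_coprime A C"
    and H2: "right_poly_basis H2 G"
  shows "is_poly_mat (- (Ainv * rat_of_pmat B * rat_of_pmat H2)) \<and>
    (\<forall>H1. rat_of_pmat H1 = - (Ainv * rat_of_pmat B * rat_of_pmat H2) \<longrightarrow>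
       right_poly_basis (H1 @\<^sub>r H2) (rat_of_pmat (four_block_mat A B (- C) D)))"

proof -
  define a where "a = rat_of_pmat A"
  define b where "b = rat_of_pmat B"
  define c where "c = rat_of_pmat C"
  define d where "d = rat_of_pmat D"
  define h2 where "h2 = rat_of_pmat H2"
  define k where "k = dim_col H2"
  have a: "a \<in> carrier_mat n n" and b: "b \<in> carrier_mat n m" and c: "c \<in> carrier_mat p n"
    and d: "d \<in> carrier_mat p m" using A B C D by (auto simp: a_def b_def c_def d_def)
  have Gc: "G \<in> carrier_mat p m" unfolding G using a b c d Ainv(1) by (auto simp: a_def b_def c_def d_def)
  have H2c: "H2 \<in> carrier_mat m k" using H2 Gc unfolding right_poly_basis_def k_def carrier_mat_def by auto
  hence h2: "h2 \<in> carrier_mat m k" by (simp add: h2_def)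
  have H2b: "columns_basis_of h2 (right_null_space G)" using H2 unfolding right_poly_basis_def h2_def by auto
  have colnull: "\<forall>j<k. G *\<^sub>v col h2 j = 0\<^sub>v p"
    using H2b h2 Gc unfolding columns_basis_of_def right_null_space_def by auto
  have Gh: "G * h2 = 0\<^sub>m p k" by (rule null_mat[OF Gc h2 colnull])
  obtain X Y where X: "X \<in> carrier_mat n n" and Y: "Y \<in> carrier_mat n p" and XY: "X * A + Y * C = 1\<^sub>m n"
    using coprime A C unfolding right_coprime_def by auto
  define x where "x = rat_of_pmat X"
  define y where "y = rat_of_pmat Y"
  have x: "x \<in> carrier_mat n n" and y: "y \<in> carrier_mat n p" using X Y by (auto simp: x_def y_def)
  have xy: "x * a + y * c = 1\<^sub>m n"
  proof -
    have "rat_of_pmat (X * A + Y * C) = x * a + y * c"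
      using X Y A C by (simp add: rat_add[of _ n n] rat_mult[of _ n n] rat_mult[of _ n p] x_def y_def a_def c_def)
    thus ?thesis using XY rat_one by metis
  qed
  have Ainv_eq: "Ainv = x + y * c * Ainv"
  proof -
    have "Ainv = 1\<^sub>m n * Ainv" using Ainv(1) by simp
    also have "\<dots> = (x * a + y * c) * Ainv" using xy by simp
    also have "\<dots> = x * a * Ainv + y * c * Ainv" using x a y c Ainv(1) by (metis add_mult_distrib_mat mult_carrier_mat)
    also have "x * a * Ainv = x" using x a Ainv by (simp add: a_def)
    finally show ?thesis .
  qed
  have cab: "c * Ainv * b * h2 = - (d * h2)"
  proof -
    have "G * h2 = d * h2 + c * Ainv * b * h2" unfolding G using d c b h2 Ainv(1)
      by (simp add: add_mult_distrib_mat a_def b_def c_def d_def h2_def)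
    with Gh have "d * h2 + c * Ainv * b * h2 = 0\<^sub>m p k" by simp
    thus ?thesis using d c b h2 Ainv(1)
      by (intro add_eq0[of _ p k]) auto
  qed
  have main: "- (Ainv * b * h2) = y * (d * h2) - x * (b * h2)"
  proof -
    have e1: "Ainv * b * h2 = (x + y * c * Ainv) * b * h2"
      using Ainv_eq by (rule arg_cong[where f="\<lambda>M. M * b * h2"])
    have ycA: "y * c * Ainv \<in> carrier_mat n n" using y c Ainv(1) by auto
    have e2: "(x + y * c * Ainv) * b * h2 = x * b * h2 + y * c * Ainv * b * h2"
    proof -
      have "(x + y * c * Ainv) * b = x * b + y * c * Ainv * b" by (rule add_mult_distrib_mat[OF x ycA b])
      moreover have "(x * b + y * c * Ainv * b) * h2 = x * b * h2 + y * c * Ainv * b * h2"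
        by (rule add_mult_distrib_mat[OF _ _ h2]) (use x ycA b in auto)
      ultimately show ?thesis by simp
    qed
    have e3: "y * c * Ainv * b * h2 = y * (c * Ainv * b * h2)"
    proof -
      have cA: "c * Ainv \<in> carrier_mat p n" using c Ainv(1) by auto
      have cAb: "c * Ainv * b \<in> carrier_mat p m" using cA b by auto
      have "y * c * Ainv = y * (c * Ainv)" by (rule assoc_mult_mat[OF y c Ainv(1)])
      moreover have "y * (c * Ainv) * b = y * (c * Ainv * b)" by (rule assoc_mult_mat[OF y cA b])
      moreover have "y * (c * Ainv * b) * h2 = y * (c * Ainv * b * h2)" by (rule assoc_mult_mat[OF y cAb h2])
      ultimately show ?thesis by simp
    qed
    have e4: "y * (c * Ainv * b * h2) = - (y * (d * h2))"
      unfolding cab using y d h2 by (simp add: uminus_mult_right_mat)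
    have e5: "x * b * h2 = x * (b * h2)" using x b h2 by simp
    have "Ainv * b * h2 = x * (b * h2) + - (y * (d * h2))"
      unfolding e1 e2 e3 e4 e5 ..
    thus ?thesis using x b h2 y d by (intro neg_lemma[of _ n k]) auto
  qed
  have polyK: "rat_of_pmat (Y * (D * H2) - X * (B * H2)) = - (Ainv * b * h2)"
  proof -
    have 1: "rat_of_pmat (Y * (D * H2)) = y * (d * h2)" unfolding y_def d_def h2_def
      using rat_mult[OF Y mult_carrier_mat[OF D H2c]] rat_mult[OF D H2c] by simp
    have 2: "rat_of_pmat (X * (B * H2)) = x * (b * h2)" unfolding x_def b_def h2_def
      using rat_mult[OF X mult_carrier_mat[OF B H2c]] rat_mult[OF B H2c] by simp
    show ?thesis unfolding main 1[symmetric] 2[symmetric]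
      by (rule rat_minus[of _ n k]) (use X Y B D H2c in auto)
  qed
  have part1: "is_poly_mat (- (Ainv * rat_of_pmat B * rat_of_pmat H2))"
    unfolding is_poly_mat_def using polyK by (auto simp: b_def h2_def)
  define Pm where "Pm = four_block_mat a b (- c) d"
  have Pm: "Pm \<in> carrier_mat (n + p) (n + m)" unfolding Pm_def using a b c d by auto
  have Pm_eq: "rat_of_pmat (four_block_mat A B (- C) D) = Pm"
    unfolding Pm_def using A B C D
    by (simp add: rat_four[of _ n n _ m _ p] rat_uminus a_def b_def c_def d_def)
  have key: "(Pm *\<^sub>v (u @\<^sub>v w) = 0\<^sub>v (n + p)) \<longleftrightarrow> (u = - (Ainv *\<^sub>v (b *\<^sub>v w)) \<and> G *\<^sub>v w = 0\<^sub>v p)"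
    if u: "u \<in> carrier_vec n" and w: "w \<in> carrier_vec m" for u w
  proof -
    define bw where "bw = b *\<^sub>v w"
    have bw: "bw \<in> carrier_vec n" unfolding bw_def using b w by auto
    have "Pm *\<^sub>v (u @\<^sub>v w) = (a *\<^sub>v u + b *\<^sub>v w) @\<^sub>v (- c *\<^sub>v u + d *\<^sub>v w)"
      unfolding Pm_def by (rule four_block_mat_mult_vec[OF a b _ d u w]) (use c in auto)
    moreover have "((a *\<^sub>v u + b *\<^sub>v w) @\<^sub>v (- c *\<^sub>v u + d *\<^sub>v w) = 0\<^sub>v n @\<^sub>v 0\<^sub>v p)
      = (a *\<^sub>v u + b *\<^sub>v w = 0\<^sub>v n \<and> - c *\<^sub>v u + d *\<^sub>v w = 0\<^sub>v p)"
      by (rule append_vec_eq[of _ n]) (use a u b w in auto)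
    ultimately have e: "(Pm *\<^sub>v (u @\<^sub>v w) = 0\<^sub>v (n + p)) \<longleftrightarrow> (a *\<^sub>v u + bw = 0\<^sub>v n \<and> - c *\<^sub>v u + d *\<^sub>v w = 0\<^sub>v p)"
      unfolding zero_append bw_def by simp
    have e1: "(a *\<^sub>v u + bw = 0\<^sub>v n) \<longleftrightarrow> u = - (Ainv *\<^sub>v bw)"
    proof
      assume h: "a *\<^sub>v u + bw = 0\<^sub>v n"
      have au: "a *\<^sub>v u = - bw" by (rule vec_add_eq0[OF _ bw h]) (use a u in auto)
      have "u = (Ainv * a) *\<^sub>v u" using Ainv(2) u by (simp add: a_def)
      also have "\<dots> = Ainv *\<^sub>v (a *\<^sub>v u)" using Ainv(1) a u by simp
      also have "\<dots> = - (Ainv *\<^sub>v bw)" unfolding au by (rule vec_neg[OF Ainv(1) bw])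
      finally show "u = - (Ainv *\<^sub>v bw)" .
    next
      assume h: "u = - (Ainv *\<^sub>v bw)"
      have "a *\<^sub>v u = - (a *\<^sub>v (Ainv *\<^sub>v bw))" unfolding h
        by (rule vec_neg[OF a]) (use Ainv(1) bw in auto)
      also have "a *\<^sub>v (Ainv *\<^sub>v bw) = (a * Ainv) *\<^sub>v bw" using Ainv(1) a bw by simp
      also have "\<dots> = bw" using Ainv(3) bw by (simp add: a_def)
      finally show "a *\<^sub>v u + bw = 0\<^sub>v n" using bw by simp
    qed
    have e2: "- c *\<^sub>v (- (Ainv *\<^sub>v bw)) + d *\<^sub>v w = G *\<^sub>v w"
    proof -
      have "- c *\<^sub>v (- (Ainv *\<^sub>v bw)) = - (c *\<^sub>v (- (Ainv *\<^sub>v bw)))"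
        using c Ainv(1) bw by (intro uminus_mult_mat_vec) auto
      also have "c *\<^sub>v (- (Ainv *\<^sub>v bw)) = - (c *\<^sub>v (Ainv *\<^sub>v bw))"
        by (rule vec_neg[OF c]) (use Ainv(1) bw in auto)
      finally have 1: "- c *\<^sub>v (- (Ainv *\<^sub>v bw)) = c *\<^sub>v (Ainv *\<^sub>v bw)" by simp
      have "G *\<^sub>v w = d *\<^sub>v w + (c * Ainv * b) *\<^sub>v w" unfolding G d_def[symmetric] c_def[symmetric] b_def[symmetric]
        by (rule add_mult_distrib_mat_vec[OF _ _ w]) (use d c Ainv(1) b in auto)
      also have "(c * Ainv * b) *\<^sub>v w = c *\<^sub>v (Ainv *\<^sub>v bw)" unfolding bw_def
        using assoc_mult_mat_vec[OF mult_carrier_mat[OF c Ainv(1)] b w]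
          assoc_mult_mat_vec[OF c Ainv(1), of "b *\<^sub>v w"] b w by (simp only:) auto
      finally show ?thesis unfolding 1
        using comm_add_vec[of "c *\<^sub>v (Ainv *\<^sub>v bw)" p "d *\<^sub>v w"] c Ainv(1) bw d w by simp
    qed
    show ?thesis unfolding e e1 bw_def[symmetric] using e2 by auto
  qed
  have h2basis: "\<forall>cc \<in> carrier_vec k. h2 *\<^sub>v cc = 0\<^sub>v m \<longrightarrow> cc = 0\<^sub>v k"
    "\<forall>w \<in> right_null_space G. \<exists>cc \<in> carrier_vec k. w = h2 *\<^sub>v cc"
    using H2b h2 unfolding columns_basis_of_def by auto
  have part2: "right_poly_basis (H1 @\<^sub>r H2) (rat_of_pmat (four_block_mat A B (- C) D))"
    if hH1: "rat_of_pmat H1 = - (Ainv * rat_of_pmat B * rat_of_pmat H2)" for H1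
  proof -
    define h1 where "h1 = rat_of_pmat H1"
    have h1eq: "h1 = - (Ainv * b * h2)" unfolding h1_def hH1 b_def h2_def ..
    have h1: "h1 \<in> carrier_mat n k" unfolding h1eq using Ainv(1) b h2 by auto
    hence H1c: "H1 \<in> carrier_mat n k" unfolding h1_def by simp
    have hh: "rat_of_pmat (H1 @\<^sub>r H2) = h1 @\<^sub>r h2"
      unfolding h1_def h2_def by (rule rat_append_rows[OF H1c H2c])
    have hhc: "h1 @\<^sub>r h2 \<in> carrier_mat (n + m) k" using h1 h2 by auto
    have h1v: "h1 *\<^sub>v cc = - (Ainv *\<^sub>v (b *\<^sub>v (h2 *\<^sub>v cc)))" if cc: "cc \<in> carrier_vec k" for cc
    proof -
      have "h1 *\<^sub>v cc = - ((Ainv * b * h2) *\<^sub>v cc)" unfolding h1eq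
        by (rule uminus_mult_mat_vec) (use Ainv(1) b h2 cc in auto)
      also have "(Ainv * b * h2) *\<^sub>v cc = (Ainv * b) *\<^sub>v (h2 *\<^sub>v cc)"
        by (rule assoc_mult_mat_vec[OF _ h2 cc]) (use Ainv(1) b in auto)
      also have "\<dots> = Ainv *\<^sub>v (b *\<^sub>v (h2 *\<^sub>v cc))"
        by (rule assoc_mult_mat_vec[OF Ainv(1) b]) (use h2 cc in auto)
      finally show ?thesis .
    qed
    have hhv: "(h1 @\<^sub>r h2) *\<^sub>v cc = (h1 *\<^sub>v cc) @\<^sub>v (h2 *\<^sub>v cc)" if cc: "cc \<in> carrier_vec k" for cc
      by (rule mat_mult_append[OF h1 h2 cc])
    have nullP: "right_null_space Pm = {x \<in> carrier_vec (n + m). Pm *\<^sub>v x = 0\<^sub>v (n + p)}"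
      unfolding right_null_space_def using Pm by auto
    have cols: "\<forall>j < dim_col (h1 @\<^sub>r h2). col (h1 @\<^sub>r h2) j \<in> right_null_space Pm"
    proof (intro allI impI)
      fix j assume "j < dim_col (h1 @\<^sub>r h2)"
      hence j: "j < k" using hhc by auto
      have colj: "col (h1 @\<^sub>r h2) j = col h1 j @\<^sub>v col h2 j" unfolding append_rows_def
        by (rule col_four_block_mat(1)[of _ n k _ 0 _ m]) (use h1 h2 j in auto)
      have c1: "col h1 j = - (Ainv *\<^sub>v (b *\<^sub>v col h2 j))"
      proof -
        have "col h1 j = - col (Ainv * b * h2) j" unfolding h1eq
          by (rule col_uminus) (use h2 j in auto)
        also have "col (Ainv * b * h2) j = (Ainv * b) *\<^sub>v col h2 j"
          by (rule col_mult2[OF _ h2 j]) (use Ainv(1) b in auto)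
        also have "\<dots> = Ainv *\<^sub>v (b *\<^sub>v col h2 j)"
          by (rule assoc_mult_mat_vec[OF Ainv(1) b]) (use h2 j in auto)
        finally show ?thesis .
      qed
      have ch2: "col h2 j \<in> carrier_vec m" using h2 j by auto
      have "Pm *\<^sub>v (col h1 j @\<^sub>v col h2 j) = 0\<^sub>v (n + p)"
        by (subst key) (use c1 colnull j ch2 Ainv(1) b in auto)
      thus "col (h1 @\<^sub>r h2) j \<in> right_null_space Pm" unfolding nullP colj
        using h1 j ch2 by auto
    qed
    have indep: "\<forall>cc \<in> carrier_vec (dim_col (h1 @\<^sub>r h2)). (h1 @\<^sub>r h2) *\<^sub>v cc = 0\<^sub>v (dim_row (h1 @\<^sub>r h2))
        \<longrightarrow> cc = 0\<^sub>v (dim_col (h1 @\<^sub>r h2))"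
    proof (intro ballI impI)
      fix cc assume cc: "cc \<in> carrier_vec (dim_col (h1 @\<^sub>r h2))"
        and z: "(h1 @\<^sub>r h2) *\<^sub>v cc = 0\<^sub>v (dim_row (h1 @\<^sub>r h2))"
      have cc': "cc \<in> carrier_vec k" using cc hhc by auto
      have "(h1 *\<^sub>v cc) @\<^sub>v (h2 *\<^sub>v cc) = 0\<^sub>v n @\<^sub>v 0\<^sub>v m"
        using z hhc unfolding hhv[OF cc'] zero_append[symmetric] by auto
      hence "h2 *\<^sub>v cc = 0\<^sub>v m" by (subst (asm) append_vec_eq[of _ n]) (use h1 cc' in auto)
      thus "cc = 0\<^sub>v (dim_col (h1 @\<^sub>r h2))" using h2basis(1) cc' hhc by auto
    qed
    have span: "\<forall>xx \<in> right_null_space Pm. \<exists>cc \<in> carrier_vec (dim_col (h1 @\<^sub>r h2)). xx = (h1 @\<^sub>r h2) *\<^sub>v cc"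
    proof
      fix xx assume "xx \<in> right_null_space Pm"
      hence xx: "xx \<in> carrier_vec (n + m)" and z: "Pm *\<^sub>v xx = 0\<^sub>v (n + p)" unfolding nullP by auto
      define u where "u = vec_first xx n"
      define w where "w = vec_last xx m"
      have xuw: "xx = u @\<^sub>v w" unfolding u_def w_def using xx by simp
      have u: "u \<in> carrier_vec n" and w: "w \<in> carrier_vec m" unfolding u_def w_def by auto
      from key[OF u w] z xuw have ueq: "u = - (Ainv *\<^sub>v (b *\<^sub>v w))" and Gw: "G *\<^sub>v w = 0\<^sub>v p" by auto
      have "w \<in> right_null_space G" unfolding right_null_space_def using Gw w Gc by auto
      then obtain cc where cc: "cc \<in> carrier_vec k" and wc: "w = h2 *\<^sub>v cc" using h2basis(2) by auto
      have "xx = (h1 @\<^sub>r h2) *\<^sub>v cc" unfolding hhv[OF cc] h1v[OF cc] xuw ueq wc ..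
      thus "\<exists>cc \<in> carrier_vec (dim_col (h1 @\<^sub>r h2)). xx = (h1 @\<^sub>r h2) *\<^sub>v cc" using cc hhc by auto
    qed
    show ?thesis unfolding right_poly_basis_def hh Pm_eq columns_basis_of_def
      using cols indep span hhc Pm carrier_append_rows[OF H1c H2c] by auto
  qed
  show ?thesis using part1 part2 by blast
qed

end
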